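(* Let $G$ be a claw-free graph and $C$ an even hole of length $2k$, labelled $C=\mathbf{b}_0-\mathbf{a}_0-\mathbf{b}_1-\mathbf{a}_1-\dots-\mathbf{b}_{k-1}-\mathbf{a}_{k-1}-\mathbf{b}_0$ (indices mod $k$). Let $\mathbf{s}\notin C$ with $\Gamma_C(\mathbf{s})=\{\mathbf{b}_0,\mathbf{a}_0,\mathbf{b}_1\}$, and let $\mathbf{t}\notin C\cup\{\mathbf{s}\}$ be adjacent to exactly one element of $\{\mathbf{s},\mathbf{a}_0\}$. Then, with $\mathbf{u}\in\{\mathbf{s},\mathbf{a}_0\}$ denoting that element, $\Gamma_{\{\mathbf{s}\}\cup C}(\mathbf{t})$ is one of (i) $\{\mathbf{a}_{k-1},\mathbf{b}_0,\mathbf{u}\}$; (ii) $\{\mathbf{b}_{k-1},\mathbf{a}_{k-1},\mathbf{b}_0,\mathbf{u}\}$; (iii) $\{\mathbf{u},\mathbf{b}_1,\mathbf{a}_1\}$; (iv) $\{\mathbf{u},\mathbf{b}_1,\mathbf{a}_1,\mathbf{b}_2\}$. If $k=2$, cases (ii) and (iv) coincide.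
   Context: A hole is an induced cycle of length at least 4; an even hole has even length. Claw-free: no induced $K_{1,3}$. $\Gamma_U(\mathbf{t})$ denotes the set of neighbours of $\mathbf{t}$ in $U$. (The condition on $\mathbf{s}$ says $(C\setminus\{\mathbf{a}_0\})\cup\{\mathbf{s}\}$ is a single-vertex deformation of $C$, with $\mathbf{a}_0$ the clone of $\mathbf{s}$.) *)

theory Defs
  imports Main
begin

definition graph :: "'v set \<Rightarrow> ('v \<Rightarrow> 'v \<Rightarrow> bool) \<Rightarrow> bool" where
  "graph V E \<longleftrightarrow> (\<forall>x y. E x y \<longrightarrow> x \<in> V \<and> y \<in> V \<and> E y x \<and> x \<noteq> y)"

definition claw_free :: "'v set \<Rightarrow> ('v \<Rightarrow> 'v \<Rightarrow> bool) \<Rightarrow> bool" where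
  "claw_free V E \<longleftrightarrow> \<not> (\<exists>x\<in>V. \<exists>y\<in>V. \<exists>z\<in>V. \<exists>w\<in>V.
      E x y \<and> E x z \<and> E x w \<and> y \<noteq> z \<and> y \<noteq> w \<and> z \<noteq> w \<and>
      \<not> E y z \<and> \<not> E y w \<and> \<not> E z w)"

definition hole :: "'v set \<Rightarrow> ('v \<Rightarrow> 'v \<Rightarrow> bool) \<Rightarrow> (nat \<Rightarrow> 'v) \<Rightarrow> nat \<Rightarrow> bool" where
  "hole V E c n \<longleftrightarrow> n \<ge> 4 \<and> (\<forall>i<n. c i \<in> V) \<and> inj_on c {..<n} \<and>
     (\<forall>i<n. \<forall>j<n. E (c i) (c j) \<longleftrightarrow> (j = Suc i mod n \<or> i = Suc j mod n))"

definition interleave :: "(nat \<Rightarrow> 'v) \<Rightarrow> (nat \<Rightarrow> 'v) \<Rightarrow> nat \<Rightarrow> 'v" where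
  "interleave b a i = (if even i then b (i div 2) else a (i div 2))"

definition nbrs :: "('v \<Rightarrow> 'v \<Rightarrow> bool) \<Rightarrow> 'v set \<Rightarrow> 'v \<Rightarrow> 'v set" where
  "nbrs E U t = {x \<in> U. E t x}"

end

theory Submission
  imports Defs
begin

lemma clawD:
  assumes "claw_free V E" "x\<in>V" "y\<in>V" "z\<in>V" "w\<in>V" "E x y" "E x z" "E x w"
    "y\<noteq>z" "y\<noteq>w" "z\<noteq>w" "\<not>E y z" "\<not>E y w" "\<not>E z w"
  shows False using assms unfolding claw_free_def by blast

lemma Suc_mod_lt: "i < n \<Longrightarrow> Suc i mod n = (if Suc i = n then 0 else Suc i)"
  by auto

theorem lemma3:
  fixes V :: "'v set" and E :: "'v \<Rightarrow> 'v \<Rightarrow> bool"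
    and a b :: "nat \<Rightarrow> 'v" and k :: nat and s t :: 'v
  defines "C \<equiv> interleave b a ` {..<2*k}"
  defines "u \<equiv> (if E t s then s else a 0)"
  assumes "graph V E"
    and "claw_free V E"
    and "hole V E (interleave b a) (2*k)"
    and "s \<in> V" and "s \<notin> C"
    and "nbrs E C s = {b 0, a 0, b 1}"
    and "t \<in> V" and "t \<notin> C" and "t \<noteq> s"
    and "E t s \<noteq> E t (a 0)"
  shows "nbrs E (insert s C) t \<in>
           { {a (k-1), b 0, u},
             {b (k-1), a (k-1), b 0, u},
             {u, b 1, a 1},
             {u, b 1, a 1, b (2 mod k)} }"
proof -
  define n where "n = 2*k"
  define c where "c = interleave b a"
  note G = assms(3) and CF = assms(4)
  have hn: "n \<ge> 4" using assms(5) unfolding hole_def n_def by simp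
  have cV: "\<And>i. i<n \<Longrightarrow> c i \<in> V" using assms(5) unfolding hole_def n_def c_def by simp
  have cinj[simp]: "\<And>i j. i<n \<Longrightarrow> j<n \<Longrightarrow> c i = c j \<longleftrightarrow> i=j"
    using assms(5) unfolding hole_def n_def c_def inj_on_def by auto
  have cadj: "\<And>i j. i<n \<Longrightarrow> j<n \<Longrightarrow> E (c i) (c j) \<longleftrightarrow>
      (j = i+1 \<or> i = j+1 \<or> (i=0 \<and> j=n-1) \<or> (j=0 \<and> i=n-1))"
  proof -
    fix i j assume ij: "i<n" "j<n"
    have "E (c i) (c j) \<longleftrightarrow> (j = Suc i mod n \<or> i = Suc j mod n)"
      using assms(5) ij unfolding hole_def n_def c_def by blast
    then show "?thesis i j" using ij by (auto simp: Suc_mod_lt)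
  qed
  have Cc: "C = c ` {..<n}" unfolding C_def c_def n_def ..
  have sc[simp]: "\<And>i. i<n \<Longrightarrow> c i \<noteq> s" using assms(7) Cc by auto
  have tc[simp]: "\<And>i. i<n \<Longrightarrow> c i \<noteq> t" using assms(10) Cc by auto
  have sym: "\<And>x y. E x y = E y x" using G unfolding graph_def by blast
  have c0: "c 0 = b 0" and c1: "c 1 = a 0" and c2: "c 2 = b 1" and c3: "c 3 = a 1"
    unfolding c_def interleave_def by auto
  have cn1: "c (n-1) = a (k-1)"
  proof -
    have "odd (2*k-1)" "(2*k-1) div 2 = k-1" using hn n_def by presburger+
    then show ?thesis unfolding c_def interleave_def n_def by simp
  qed
  have cn2: "c (n-2) = b (k-1)"
  proof -
    have "even (2*k-2)" "(2*k-2) div 2 = k-1" using hn n_def by presburger+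
    then show ?thesis unfolding c_def interleave_def n_def by simp
  qed
  have c4: "c (4 mod n) = b (2 mod k)"
  proof (cases "k = 2")
    case True then show ?thesis unfolding c_def interleave_def n_def by simp
  next
    case False
    then have "k \<ge> 3" using hn n_def by auto
    then have "4 mod n = 4" "2 mod k = 2" using n_def by auto
    then show ?thesis unfolding c_def interleave_def by simp
  qed
  have sadj: "\<And>i. i<n \<Longrightarrow> E s (c i) \<longleftrightarrow> i \<le> 2"
  proof -
    fix i assume i: "i<n"
    have "E s (c i) \<longleftrightarrow> c i \<in> nbrs E C s" unfolding nbrs_def Cc using i by auto
    also have "\<dots> \<longleftrightarrow> c i \<in> {c 0, c 1, c 2}" using assms(8) c0 c1 c2 by simp
    also have "\<dots> \<longleftrightarrow> i \<le> 2" using i hn by auto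
    finally show "E s (c i) \<longleftrightarrow> i \<le> 2" .
  qed
  define T where "T = {i. i<n \<and> E t (c i)}"
  have nb: "nbrs E (insert s C) t = (if E t s then insert s (c ` T) else c ` T)"
    unfolding nbrs_def T_def Cc by auto
  have a0: "E t s \<noteq> E t (c 1)" using assms(12) c1 by simp
  have claw: "\<And>x y z w. x\<in>V \<Longrightarrow> y\<in>V \<Longrightarrow> z\<in>V \<Longrightarrow> w\<in>V \<Longrightarrow> E x y \<Longrightarrow> E x z \<Longrightarrow> E x w \<Longrightarrow>
    y\<noteq>z \<Longrightarrow> y\<noteq>w \<Longrightarrow> z\<noteq>w \<Longrightarrow> \<not>E y z \<Longrightarrow> \<not>E y w \<Longrightarrow> \<not>E z w \<Longrightarrow> False"
    using clawD[OF CF] by blast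
  have sV: "s \<in> V" and tV: "t \<in> V" using assms by auto
  have st: "s \<noteq> t" using assms(11) by simp
  have [simp]: "\<And>i. i<n \<Longrightarrow> E (c i) s = E s (c i)" "\<And>i. i<n \<Longrightarrow> E (c i) t = E t (c i)"
    "E s t = E t s" using sym by blast+
  have [simp]: "c i \<in> V" if "i<n" for i using cV that .
  note sV[simp] tV[simp] st[simp]
  have [simp]: "\<And>i. i<n \<Longrightarrow> s \<noteq> c i" "\<And>i. i<n \<Longrightarrow> t \<noteq> c i" "t \<noteq> s" using sc tc st by metis+
  have [simp]: "n-1 \<noteq> 0" "n-1 \<noteq> 1" "n-1 \<noteq> 2" "n-2 \<noteq> 0" "n-2 \<noteq> 1" "n-1 \<noteq> n-2" "n-2 \<noteq> n-1" "0 \<noteq> n-1" "1 \<noteq> n-1" "2 \<noteq> n-1" "0 \<noteq> n-2" "1 \<noteq> n-2" using hn by auto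
  have n5: "n \<noteq> 5" using n_def by presburger
  have n1: "n-1 < n" "n-2<n" "0<n" "1<n" "2<n" "3<n" using hn by auto
  have key: "nbrs E (insert s C) t \<in>
           { {c (n-1), c 0, u}, {c (n-2), c (n-1), c 0, u},
             {u, c 2, c 3}, {u, c 2, c 3, c (4 mod n)} }"
  proof (cases "E t s")
    case True
    then have nt1: "\<not> E t (c 1)" and us: "u = s" using a0 u_def c1 by auto
    have "E t (c 0) \<or> E t (c 2)"
    proof (rule ccontr)
      assume "\<not> ?thesis"
      then show False using True hn n1 by - (rule claw[of s "c 0" "c 2" t], auto simp: cadj sadj)
    qed
    then show ?thesis
    proof
      assume t0: "E t (c 0)"
      have tn1: "E t (c (n-1))"
      proof (rule ccontr)
        assume "\<not> ?thesis"
        then show False using t0 nt1 hn n1 by - (rule claw[of "c 0" "c (n-1)" "c 1" t], auto simp: cadj sadj)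
      qed
      have T1: "i \<in> {n-2,n-1,0,1,2}" if "i<n" "E t (c i)" for i
      proof (rule ccontr)
        assume "\<not> ?thesis"
        then show False using that True tn1 hn n1 by - (rule claw[of t s "c (n-1)" "c i"], auto simp: cadj sadj)
      qed
      have T2: "n = 4" if "E t (c 2)"
      proof (rule ccontr)
        assume "n \<noteq> 4"
        then have "\<not> E t (c 3)" using T1[of 3] hn n5 by auto
        then show False using that nt1 hn n1 by - (rule claw[of "c 2" "c 1" "c 3" t], auto simp: cadj sadj)
      qed
      show ?thesis
      proof (cases "E t (c (n-2))")
        case True
        have "T = {n-2,n-1,0}"
        proof (intro set_eqI iffI)
          fix x :: nat assume "x \<in> T"
          then have x: "x<n" "E t (c x)" unfolding T_def by auto
          show "x \<in> {n-2,n-1,0}" using T1[OF x] x T1 T2 True t0 tn1 nt1 n1 by (cases "x=2"; cases "x = 4"; auto)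
        next
          fix x :: nat assume "x \<in> {n-2,n-1,0}"
          then show "x \<in> T" unfolding T_def using T1 T2 True t0 tn1 nt1 n1 by auto
        qed
        then have "nbrs E (insert s C) t = {c (n-2), c (n-1), c 0, u}" using nb \<open>E t s\<close> us by auto
        then show ?thesis by simp
      next
        case False
        have "T = {n-1,0}"
        proof (intro set_eqI iffI)
          fix x :: nat assume "x \<in> T"
          then have x: "x<n" "E t (c x)" unfolding T_def by auto
          show "x \<in> {n-1,0}" using T1[OF x] x T1 T2 False t0 tn1 nt1 n1 by (cases "x=2"; cases "x = 4"; auto)
        next
          fix x :: nat assume "x \<in> {n-1,0}"
          then show "x \<in> T" unfolding T_def using T1 T2 False t0 tn1 nt1 n1 by auto
        qed
        then have "nbrs E (insert s C) t = {c (n-1), c 0, u}" using nb \<open>E t s\<close> us by auto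
        then show ?thesis by simp
      qed
    next
      assume t2: "E t (c 2)"
      show ?thesis
      proof (cases "E t (c 0)")
        case t0: True
        have tn1: "E t (c (n-1))"
        proof (rule ccontr)
          assume "\<not> ?thesis"
          then show False using t0 nt1 hn n1 by - (rule claw[of "c 0" "c (n-1)" "c 1" t], auto simp: cadj sadj)
        qed
        have T1: "i \<in> {n-2,n-1,0,1,2}" if "i<n" "E t (c i)" for i
        proof (rule ccontr)
          assume "\<not> ?thesis"
          then show False using that True tn1 hn n1 by - (rule claw[of t s "c (n-1)" "c i"], auto simp: cadj sadj)
        qed
        have T2: "n = 4"
        proof (rule ccontr)
          assume "n \<noteq> 4"
          then have "\<not> E t (c 3)" using T1[of 3] hn n5 by auto
          then show False using t2 nt1 hn n1 by - (rule claw[of "c 2" "c 1" "c 3" t], auto simp: cadj sadj)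
        qed
        have "T = {n-2,n-1,0}"
        proof (intro set_eqI iffI)
          fix x :: nat assume "x \<in> T"
          then have x: "x<n" "E t (c x)" unfolding T_def by auto
          show "x \<in> {n-2,n-1,0}" using T1[OF x] x T1 T2 t2 t0 tn1 nt1 n1 by (cases "x=2"; cases "x = 4"; auto)
        next
          fix x :: nat assume "x \<in> {n-2,n-1,0}"
          then show "x \<in> T" unfolding T_def using T1 T2 t2 t0 tn1 nt1 n1 by auto
        qed
        then have "nbrs E (insert s C) t = {c (n-2), c (n-1), c 0, u}" using nb \<open>E t s\<close> us by auto
        then show ?thesis by simp
      next
        case nt0: False
        have t3: "E t (c 3)"
        proof (rule ccontr)
          assume "\<not> ?thesis"
          then show False using t2 nt1 hn n1 by - (rule claw[of "c 2" "c 1" "c 3" t], auto simp: cadj sadj)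
        qed
        have T1: "i \<in> {0,1,2,3,4}" if "i<n" "E t (c i)" for i
        proof (rule ccontr)
          assume "\<not> ?thesis"
          then show False using that True t3 hn n1 by - (rule claw[of t s "c 3" "c i"], auto simp: cadj sadj)
        qed
        show ?thesis
        proof (cases "4 < n \<and> E t (c 4)")
          case True
          then have m: "4 mod n = 4" by simp
          have "T = {2,3,4}"
          proof (intro set_eqI iffI)
            fix x :: nat assume "x \<in> T"
            then have x: "x<n" "E t (c x)" unfolding T_def by auto
            show "x \<in> {2,3,4}" using T1[OF x] x T1 True t2 t3 nt0 nt1 n1 by (cases "x=2"; cases "x = 4"; auto)
          next
            fix x :: nat assume "x \<in> {2,3,4}"
            then show "x \<in> T" unfolding T_def using T1 True t2 t3 nt0 nt1 n1 by auto
          qed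
          then have "nbrs E (insert s C) t = {u, c 2, c 3, c (4 mod n)}" using nb \<open>E t s\<close> us m by auto
          then show ?thesis by simp
        next
          case False
          have "T = {2,3}"
          proof (intro set_eqI iffI)
            fix x :: nat assume "x \<in> T"
            then have x: "x<n" "E t (c x)" unfolding T_def by auto
            show "x \<in> {2,3}" using T1[OF x] x T1 False t2 t3 nt0 nt1 n1 by (cases "x=2"; cases "x = 4"; auto)
          next
            fix x :: nat assume "x \<in> {2,3}"
            then show "x \<in> T" unfolding T_def using T1 False t2 t3 nt0 nt1 n1 by auto
          qed
          then have "nbrs E (insert s C) t = {u, c 2, c 3}" using nb \<open>E t s\<close> us by auto
          then show ?thesis by simp
        qed
      qed
    qed
  next
    case False
    then have t1: "E t (c 1)" and us: "u = c 1" using a0 u_def c1 by auto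
    have "E t (c 0) \<or> E t (c 2)"
    proof (rule ccontr)
      assume "\<not> ?thesis"
      then show False using t1 hn n1 by - (rule claw[of "c 1" "c 0" "c 2" t], auto simp: cadj sadj)
    qed
    then show ?thesis
    proof
      assume t0: "E t (c 0)"
      have tn1: "E t (c (n-1))"
      proof (rule ccontr)
        assume "\<not> ?thesis"
        then show False using t0 False hn n1 by - (rule claw[of "c 0" "c (n-1)" s t], auto simp: cadj sadj)
      qed
      have T1: "i \<in> {n-2,n-1,0,1,2}" if "i<n" "E t (c i)" for i
      proof (rule ccontr)
        assume "\<not> ?thesis"
        then show False using that t1 tn1 hn n1 by - (rule claw[of t "c 1" "c (n-1)" "c i"], auto simp: cadj sadj)
      qed
      have T2: "n = 4" if "E t (c 2)"
      proof (rule ccontr)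
        assume "n \<noteq> 4"
        then have "\<not> E t (c 3)" using T1[of 3] hn n5 by auto
        then show False using that False hn n1 by - (rule claw[of "c 2" "c 3" s t], auto simp: cadj sadj)
      qed
      show ?thesis
      proof (cases "E t (c (n-2))")
        case True
        have "T = {n-2,n-1,0,1}"
        proof (intro set_eqI iffI)
          fix x :: nat assume "x \<in> T"
          then have x: "x<n" "E t (c x)" unfolding T_def by auto
          show "x \<in> {n-2,n-1,0,1}" using T1[OF x] x T1 T2 True t0 tn1 t1 n1 by (cases "x=2"; cases "x = 4"; auto)
        next
          fix x :: nat assume "x \<in> {n-2,n-1,0,1}"
          then show "x \<in> T" unfolding T_def using T1 T2 True t0 tn1 t1 n1 by auto
        qed
        then have "nbrs E (insert s C) t = {c (n-2), c (n-1), c 0, u}" using nb False us by auto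
        then show ?thesis by simp
      next
        case nt: False
        have "T = {n-1,0,1}"
        proof (intro set_eqI iffI)
          fix x :: nat assume "x \<in> T"
          then have x: "x<n" "E t (c x)" unfolding T_def by auto
          show "x \<in> {n-1,0,1}" using T1[OF x] x T1 T2 nt t0 tn1 t1 n1 by (cases "x=2"; cases "x = 4"; auto)
        next
          fix x :: nat assume "x \<in> {n-1,0,1}"
          then show "x \<in> T" unfolding T_def using T1 T2 nt t0 tn1 t1 n1 by auto
        qed
        then have "nbrs E (insert s C) t = {c (n-1), c 0, u}" using nb False us by auto
        then show ?thesis by simp
      qed
    next
      assume t2: "E t (c 2)"
      show ?thesis
      proof (cases "E t (c 0)")
        case t0: True
        have tn1: "E t (c (n-1))"
        proof (rule ccontr)
          assume "\<not> ?thesis"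
          then show False using t0 False hn n1 by - (rule claw[of "c 0" "c (n-1)" s t], auto simp: cadj sadj)
        qed
        have T1: "i \<in> {n-2,n-1,0,1,2}" if "i<n" "E t (c i)" for i
        proof (rule ccontr)
          assume "\<not> ?thesis"
          then show False using that t1 tn1 hn n1 by - (rule claw[of t "c 1" "c (n-1)" "c i"], auto simp: cadj sadj)
        qed
        have T2: "n = 4"
        proof (rule ccontr)
          assume "n \<noteq> 4"
          then have "\<not> E t (c 3)" using T1[of 3] hn n5 by auto
          then show False using t2 False hn n1 by - (rule claw[of "c 2" "c 3" s t], auto simp: cadj sadj)
        qed
        have "T = {n-2,n-1,0,1}"
        proof (intro set_eqI iffI)
          fix x :: nat assume "x \<in> T"
          then have x: "x<n" "E t (c x)" unfolding T_def by auto
          show "x \<in> {n-2,n-1,0,1}" using T1[OF x] x T1 T2 t2 t0 tn1 t1 n1 by (cases "x=2"; cases "x = 4"; auto)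
        next
          fix x :: nat assume "x \<in> {n-2,n-1,0,1}"
          then show "x \<in> T" unfolding T_def using T1 T2 t2 t0 tn1 t1 n1 by auto
        qed
        then have "nbrs E (insert s C) t = {c (n-2), c (n-1), c 0, u}" using nb False us by auto
        then show ?thesis by simp
      next
        case nt0: False
        have t3: "E t (c 3)"
        proof (rule ccontr)
          assume "\<not> ?thesis"
          then show False using t2 False hn n1 by - (rule claw[of "c 2" "c 3" s t], auto simp: cadj sadj)
        qed
        have T1: "i \<in> {0,1,2,3,4}" if "i<n" "E t (c i)" for i
        proof (rule ccontr)
          assume "\<not> ?thesis"
          then show False using that t1 t3 hn n1 by - (rule claw[of t "c 1" "c 3" "c i"], auto simp: cadj sadj)
        qed
        show ?thesis
        proof (cases "4 < n \<and> E t (c 4)")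
          case True
          then have m: "4 mod n = 4" by simp
          have "T = {1,2,3,4}"
          proof (intro set_eqI iffI)
            fix x :: nat assume "x \<in> T"
            then have x: "x<n" "E t (c x)" unfolding T_def by auto
            show "x \<in> {1,2,3,4}" using T1[OF x] x T1 True t2 t3 nt0 t1 n1 by (cases "x=2"; cases "x = 4"; auto)
          next
            fix x :: nat assume "x \<in> {1,2,3,4}"
            then show "x \<in> T" unfolding T_def using T1 True t2 t3 nt0 t1 n1 by auto
          qed
          then have "nbrs E (insert s C) t = {u, c 2, c 3, c (4 mod n)}" using nb False us m by auto
          then show ?thesis by simp
        next
          case nF: False
          have "T = {1,2,3}"
          proof (intro set_eqI iffI)
            fix x :: nat assume "x \<in> T"
            then have x: "x<n" "E t (c x)" unfolding T_def by auto
            show "x \<in> {1,2,3}" using T1[OF x] x T1 nF t2 t3 nt0 t1 n1 by (cases "x=2"; cases "x = 4"; auto)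
          next
            fix x :: nat assume "x \<in> {1,2,3}"
            then show "x \<in> T" unfolding T_def using T1 nF t2 t3 nt0 t1 n1 by auto
          qed
          then have "nbrs E (insert s C) t = {u, c 2, c 3}" using nb False us by auto
          then show ?thesis by simp
        qed
      qed
    qed
  qed
  then show ?thesis using c0 c2 c3 cn1 cn2 c4 by simp
qed

end
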